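(* For $r\ge1$ let $\mathring Y^{(n)}_r$ be the number of vertices $v\in V_n$ whose activity is at least $r$. Then for every $0<\varepsilon<1$, $$\sup_{n\ge1}\mathbf P\big(n^{-1}\mathring Y^{(n)}_r>\varepsilon\big)\to0\qquad\text{as } r\to\infty.$$
   Context: Preferred attachment affiliation model. Fix a real $\lambda>0$, an integer $k\ge 1$ and an integer $l\ge 0$ with $\lambda\le k+l$. At time $0$ a library contains books $w_1,\dots,w_l$, each with score $1$. For $n=0,1,2,\dots$, step $n+1$ proceeds as follows: $k$ new books $w_{l+nk+1},\dots,w_{l+(n+1)k}$ arrive, each with score $1$; then a customer $v_{n+1}$ arrives and, conditionally on the past and independently over books, downloads each book $w\in W_{n+1}=\{w_1,\dots,w_{l+(n+1)k}\}$ with probability $p_{n+1,s(w)}=\lambda s(w)/(l+(n+1)k+n\lambda)$, where $s(w)$ is the current score of $w$. Every book downloaded by $v_{n+1}$ then has its score increased by $1$. Let $V_n=\{v_1,\dots,v_n\}$. The activity of a customer $v$ is the number of books it downloaded. *)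

theory Defs
  imports "HOL-Probability.Probability"
begin

fun bern_list :: "real list \<Rightarrow> bool list pmf" where
  "bern_list [] = return_pmf []"
| "bern_list (p # ps) =
     bind_pmf (bernoulli_pmf p) (\<lambda>b. bind_pmf (bern_list ps) (\<lambda>bs. return_pmf (b # bs)))"

text \<open>State after n steps: (scores of books w_1..w_{l+nk} in order, activities of v_1..v_n).
  Step n+1 (argument n): k new books of score 1 arrive, then customer v_{n+1}
  downloads each book of score s independently with probability
  lam * s / (l + (n+1)k + n lam); downloaded books get score +1.\<close>
definition paa_step :: "real \<Rightarrow> nat \<Rightarrow> nat \<Rightarrow> nat \<Rightarrow> nat list \<times> nat list
    \<Rightarrow> (nat list \<times> nat list) pmf" where
  "paa_step lam k l n st =
     (let sc = fst st @ replicate k 1;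
          den = real l + real (Suc n) * real k + real n * lam
      in bind_pmf (bern_list (map (\<lambda>s. lam * real s / den) sc))
           (\<lambda>ds. return_pmf (map2 (\<lambda>s d. if d then Suc s else s) sc ds,
                              snd st @ [length (filter id ds)])))"

fun paa_proc :: "real \<Rightarrow> nat \<Rightarrow> nat \<Rightarrow> nat \<Rightarrow> (nat list \<times> nat list) pmf" where
  "paa_proc lam k l 0 = return_pmf (replicate l 1, [])"
| "paa_proc lam k l (Suc n) = bind_pmf (paa_proc lam k l n) (paa_step lam k l n)"

definition Y_ring :: "nat \<Rightarrow> nat list \<times> nat list \<Rightarrow> nat" where
  "Y_ring r st = length (filter (\<lambda>a. r \<le> a) (snd st))"

end

theory Submission
  imports Defs
begin

lemma bern_ind_le:
  assumes "0 \<le> p"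
  shows "(\<integral>\<^sup>+b. ennreal (if b then 1 else 0) \<partial>bernoulli_pmf p) \<le> ennreal p"
proof (cases "p \<le> 1")
  case True then show ?thesis using assms by simp
next
  case False
  have "(\<integral>\<^sup>+b. ennreal (if b then 1 else 0) \<partial>bernoulli_pmf p) \<le> (\<integral>\<^sup>+b. 1 \<partial>bernoulli_pmf p)"
    by (intro nn_integral_mono) auto
  also have "\<dots> = 1" by (simp add: measure_pmf.emeasure_space_1)
  also have "\<dots> \<le> ennreal p" using False by simp
  finally show ?thesis .
qed

lemma bern_count:
  "(\<forall>p\<in>set ps. 0 \<le> p) \<Longrightarrow>
   (\<integral>\<^sup>+ds. ennreal (real (length (filter id ds))) \<partial>bern_list ps) \<le> ennreal (sum_list ps)"
proof (induction ps)
  case Nil then show ?case by simp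
next
  case (Cons p ps)
  have eq: "\<And>b bs. ennreal (real (length (filter id (b # bs)))) =
      ennreal (if b then 1 else 0) + ennreal (real (length (filter id bs)))"
    by (simp add: ennreal_plus[symmetric] del: ennreal_plus)
  have "(\<integral>\<^sup>+ds. ennreal (real (length (filter id ds))) \<partial>bern_list (p # ps)) =
     (\<integral>\<^sup>+b. (\<integral>\<^sup>+bs. ennreal (if b then 1 else 0) + ennreal (real (length (filter id bs))) \<partial>bern_list ps) \<partial>bernoulli_pmf p)"
    unfolding bern_list.simps nn_integral_bind_pmf
    by (intro nn_integral_cong) (subst nn_integral_return_pmf, simp, rule eq)
  also have "\<dots> = (\<integral>\<^sup>+b. ennreal (if b then 1 else 0) + (\<integral>\<^sup>+bs. ennreal (real (length (filter id bs))) \<partial>bern_list ps) \<partial>bernoulli_pmf p)"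
    by (intro nn_integral_cong) (simp add: nn_integral_add measure_pmf.emeasure_space_1)
  also have "\<dots> = (\<integral>\<^sup>+b. ennreal (if b then 1 else 0) \<partial>bernoulli_pmf p) + (\<integral>\<^sup>+bs. ennreal (real (length (filter id bs))) \<partial>bern_list ps)"
    by (simp add: nn_integral_add measure_pmf.emeasure_space_1)
  also have "\<dots> \<le> ennreal p + ennreal (sum_list ps)"
    using Cons by (intro add_mono bern_ind_le) (auto simp: id_def)
  also have "\<dots> = ennreal (sum_list (p # ps))"
    using Cons.prems by (simp add: ennreal_plus sum_list_nonneg)
  finally show ?case .
qed

lemma bern_len: "ds \<in> set_pmf (bern_list ps) \<Longrightarrow> length ds = length ps"
  by (induction ps arbitrary: ds) auto

lemma map2_sum: "length ds = length sc \<Longrightarrow>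
  sum_list (map2 (\<lambda>s d. if d then Suc s else s) sc ds) = sum_list sc + length (filter id ds)"
  by (induction sc arbitrary: ds) (auto simp: length_Suc_conv)

lemma sum_map_mult: "sum_list (map (\<lambda>s. c * real s) xs) = c * real (sum_list xs)"
  by (induction xs) (auto simp: algebra_simps)

lemma invar:
  "st \<in> set_pmf (paa_proc lam k l n) \<Longrightarrow> sum_list (fst st) = l + n * k + sum_list (snd st)"
proof (induction n arbitrary: st)
  case 0 then show ?case by (simp add: sum_list_replicate)
next
  case (Suc n)
  then obtain st0 ds where st0: "st0 \<in> set_pmf (paa_proc lam k l n)"
    and ds: "ds \<in> set_pmf (bern_list (map (\<lambda>s. lam * real s / (real l + real (Suc n) * real k + real n * lam)) (fst st0 @ replicate k 1)))"
    and st: "st = (map2 (\<lambda>s d. if d then Suc s else s) (fst st0 @ replicate k 1) ds,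
                              snd st0 @ [length (filter id ds)])"
    by (auto simp: paa_step_def Let_def)
  have "length ds = length (fst st0 @ replicate k 1)" using bern_len[OF ds] by simp
  then show ?case using Suc.IH[OF st0] st by (simp add: map2_sum sum_list_replicate)
qed

lemma Y_le: "length (filter (\<lambda>a. r \<le> a) xs) * r \<le> sum_list xs"
  by (induction xs) auto

lemma expect_bound:
  assumes lam: "lam > 0" and k: "k \<ge> 1"
  shows "(\<integral>\<^sup>+st. ennreal (real (sum_list (snd st))) \<partial>paa_proc lam k l n) \<le> ennreal (real n * lam)"
proof (induction n)
  case 0 then show ?case by simp
next
  case (Suc n)
  define den where "den = real l + real (Suc n) * real k + real n * lam"
  have den: "den > 0" using lam k unfolding den_def
    by (smt (verit, best) of_nat_0_le_iff of_nat_le_0_iff mult_nonneg_nonneg mult_pos_pos not_one_le_zero of_nat_0_less_iff zero_less_Suc)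
  define a where "a = (lam / den) * (real l + real (Suc n) * real k)"
  define b where "b = 1 + lam / den"
  have a0: "a \<ge> 0" and b0: "b \<ge> 0" using lam den unfolding a_def b_def by auto
  define F where "F = (\<lambda>st::nat list \<times> nat list. ennreal (real (sum_list (snd st))))"
  have inner: "(\<integral>\<^sup>+st'. F st' \<partial>paa_step lam k l n st) \<le> ennreal (a + b * real (sum_list (snd st)))"
    if st: "st \<in> set_pmf (paa_proc lam k l n)" for st
  proof -
    define sc where "sc = fst st @ replicate k 1"
    define ps where "ps = map (\<lambda>s. lam * real s / den) sc"
    have ps0: "\<forall>p\<in>set ps. 0 \<le> p" using lam den unfolding ps_def by auto
    have "(\<integral>\<^sup>+st'. F st' \<partial>paa_step lam k l n st) =
       (\<integral>\<^sup>+ds. ennreal (real (sum_list (snd st))) + ennreal (real (length (filter id ds))) \<partial>bern_list ps)"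
      unfolding paa_step_def Let_def nn_integral_bind_pmf den_def[symmetric] sc_def[symmetric] ps_def[symmetric]
      by (intro nn_integral_cong) (simp add: F_def ennreal_plus[symmetric] del: ennreal_plus)
    also have "\<dots> = ennreal (real (sum_list (snd st))) + (\<integral>\<^sup>+ds. ennreal (real (length (filter id ds))) \<partial>bern_list ps)"
      by (simp add: nn_integral_add measure_pmf.emeasure_space_1)
    also have "\<dots> \<le> ennreal (real (sum_list (snd st))) + ennreal (sum_list ps)"
      by (intro add_mono bern_count ps0 order.refl)
    also have "sum_list ps = (lam / den) * real (sum_list sc)"
      unfolding ps_def using sum_map_mult[of "lam/den" sc] by (simp add: field_simps)
    also have "real (sum_list sc) = real l + real (Suc n) * real k + real (sum_list (snd st))"
      using invar[OF st] unfolding sc_def by (simp add: sum_list_replicate algebra_simps)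
    also have "ennreal (real (sum_list (snd st))) + ennreal (lam / den * (real l + real (Suc n) * real k + real (sum_list (snd st))))
       = ennreal (a + b * real (sum_list (snd st)))"
      using lam den unfolding a_def b_def by (subst ennreal_plus[symmetric]) (auto simp: algebra_simps)
    finally show ?thesis .
  qed
  have "(\<integral>\<^sup>+st. F st \<partial>paa_proc lam k l (Suc n)) =
      (\<integral>\<^sup>+st. (\<integral>\<^sup>+st'. F st' \<partial>paa_step lam k l n st) \<partial>paa_proc lam k l n)"
    by simp
  also have "\<dots> \<le> (\<integral>\<^sup>+st. ennreal a + ennreal b * F st \<partial>paa_proc lam k l n)"
    using inner a0 b0 by (intro nn_integral_mono_AE AE_pmfI) (auto simp: F_def ennreal_plus ennreal_mult)
  also have "\<dots> = ennreal a + ennreal b * (\<integral>\<^sup>+st. F st \<partial>paa_proc lam k l n)"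
    by (simp add: nn_integral_add nn_integral_cmult measure_pmf.emeasure_space_1 F_def)
  also have "\<dots> \<le> ennreal a + ennreal b * ennreal (real n * lam)"
    using Suc unfolding F_def by (intro add_mono mult_left_mono order.refl) auto
  also have "\<dots> = ennreal (a + b * (real n * lam))"
    using a0 b0 lam by (simp add: ennreal_plus ennreal_mult)
  also have "a + b * (real n * lam) = real (Suc n) * lam"
  proof -
    have "a + b * (real n * lam) = real n * lam + (lam / den) * den"
      unfolding a_def b_def den_def by (simp add: algebra_simps add_divide_distrib[symmetric])
    then show ?thesis using den by (simp add: algebra_simps)
  qed
  finally show ?case unfolding F_def .
qed

lemma prob_bound:
  assumes lam: "lam > 0" and k: "k \<ge> 1" and r: "r \<ge> 1" and n: "n \<ge> 1" and e: "\<epsilon> > 0"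
  shows "measure_pmf.prob (paa_proc lam k l n) {st. real (Y_ring r st) / real n > \<epsilon>}
     \<le> lam / (real r * \<epsilon>)"
proof -
  define S where "S = {st. real (Y_ring r st) / real n > \<epsilon>}"
  define c where "c = 1 / (real r * real n * \<epsilon>)"
  have c0: "c > 0" using r n e unfolding c_def by auto
  define F where "F = (\<lambda>st::nat list \<times> nat list. ennreal (real (sum_list (snd st))))"
  have pt: "indicator S st \<le> ennreal c * F st" for st
  proof (cases "st \<in> S")
    case True
    have "real (Y_ring r st) > \<epsilon> * real n" using True n unfolding S_def by (simp add: field_simps)
    moreover have "real (Y_ring r st) * real r \<le> real (sum_list (snd st))"
      using Y_le[of r "snd st"] unfolding Y_ring_def by (metis of_nat_le_iff of_nat_mult)
    ultimately have "real r * \<epsilon> * real n \<le> real (sum_list (snd st))"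
    proof -
      assume A: "real (Y_ring r st) > \<epsilon> * real n" and B: "real (Y_ring r st) * real r \<le> real (sum_list (snd st))"
      have "real r * (\<epsilon> * real n) \<le> real r * real (Y_ring r st)"
        using A by (intro mult_left_mono) auto
      then show ?thesis using B by (simp add: mult.commute mult.left_commute mult.assoc)
    qed
    then have "1 \<le> c * real (sum_list (snd st))"
      using r n e unfolding c_def by (simp add: field_simps)
    then show ?thesis using True c0 unfolding F_def
      by (simp add: ennreal_mult[symmetric] del: ennreal_mult)
  next
    case False then show ?thesis by simp
  qed
  have "emeasure (measure_pmf (paa_proc lam k l n)) S = (\<integral>\<^sup>+st. indicator S st \<partial>paa_proc lam k l n)"
    by simp
  also have "\<dots> \<le> (\<integral>\<^sup>+st. ennreal c * F st \<partial>paa_proc lam k l n)"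
    by (intro nn_integral_mono pt)
  also have "\<dots> = ennreal c * (\<integral>\<^sup>+st. F st \<partial>paa_proc lam k l n)"
    by (simp add: nn_integral_cmult F_def)
  also have "\<dots> \<le> ennreal c * ennreal (real n * lam)"
    unfolding F_def by (intro mult_left_mono expect_bound lam k) auto
  also have "\<dots> = ennreal (lam / (real r * \<epsilon>))"
    using c0 lam n unfolding c_def by (simp add: ennreal_mult[symmetric] del: ennreal_mult)
  finally show ?thesis
    unfolding S_def[symmetric] measure_pmf.emeasure_eq_measure
    using lam r e by (simp add: ennreal_le_iff)
qed

theorem mainTheorem5:
  fixes lam :: real and k l :: nat and \<epsilon> :: real
  assumes "lam > 0" and "k \<ge> 1" and "lam \<le> real (k + l)"
    and "0 < \<epsilon>" and "\<epsilon> < 1"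
  shows "(\<lambda>r. SUP n\<in>{1..}. measure_pmf.prob (paa_proc lam k l n)
            {st. real (Y_ring r st) / real n > \<epsilon>}) \<longlonglongrightarrow> 0"
proof (rule tendsto_sandwich[where f = "\<lambda>_. 0" and h = "\<lambda>r. (lam / \<epsilon>) * inverse (real r)"])
  let ?P = "\<lambda>r n. measure_pmf.prob (paa_proc lam k l n) {st. real (Y_ring r st) / real n > \<epsilon>}"
  have bdd: "bdd_above ((?P r) ` {1..})" for r
    by (intro bdd_aboveI2[where M = 1]) auto
  show "\<forall>\<^sub>F r in sequentially. 0 \<le> (SUP n\<in>{1..}. ?P r n)"
    by (intro always_eventually allI cSUP_upper2[OF bdd, of 1]) auto
  show "\<forall>\<^sub>F r in sequentially. (SUP n\<in>{1..}. ?P r n) \<le> (lam / \<epsilon>) * inverse (real r)"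
  proof (intro eventually_sequentiallyI[of 1])
    fix r :: nat assume r: "r \<ge> 1"
    show "(SUP n\<in>{1..}. ?P r n) \<le> (lam / \<epsilon>) * inverse (real r)"
    proof (rule cSUP_least)
      fix n :: nat assume "n \<in> {1..}"
      then have "?P r n \<le> lam / (real r * \<epsilon>)"
        using prob_bound[OF assms(1,2) r _ assms(4)] by auto
      then show "?P r n \<le> (lam / \<epsilon>) * inverse (real r)" by (simp add: field_simps)
    qed auto
  qed
  show "(\<lambda>_. 0) \<longlonglongrightarrow> (0::real)" by simp
  show "(\<lambda>r. (lam / \<epsilon>) * inverse (real r)) \<longlonglongrightarrow> 0"
    by (rule tendsto_mult_right_zero[OF lim_inverse_n])
qed

end
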